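(* Let $(\mathbf c,\mathbf g)\in\mathbf C^5_{\rm aut}$ with $\operatorname{Hom}(N_{\mathbf c},\mathbb G_{\mathbf g})=0$, and let $\mathbf m\in\mathbf M_{\mathbf c}$ be $|N_{\mathbf c}|^+$-free over $(\mathbf c,\mathbf g)$. Then $\operatorname{Hom}(N_{\mathbf c},\mathcal Z(H_{\mathbf m}))\subseteq\operatorname{Hom}(N_{\mathbf c},H_{\mathbf c})$, i.e. every homomorphism $N_{\mathbf c}\to\mathcal Z(H_{\mathbf m})$ has image contained in $H_{\mathbf c}$.
   Context: Groups are not assumed abelian; $\mathcal Z(H)$ is the center of $H$; $J_p$ is the additive group of $p$-adic integers. $\mathbf C^4_{\rm aut}$: tuples $\mathbf c=(L_{\mathbf c},N_{\mathbf c},H_{\mathbf c},h_{\mathbf c},h^*_{\mathbf c},F_{\mathbf c},(Q^{\bar s}_{\mathbf c}),H^*_{\mathbf c},\mathbb P_{\mathbf c})$: $L_{\mathbf c},H_{\mathbf c}$ groups; $F_{\mathbf c}:L_{\mathbf c}\to\operatorname{Aut}(H_{\mathbf c})$ injective homomorphism, $F^\ell_{\mathbf c}:=F_{\mathbf c}(\ell)$; $N_{\mathbf c}\trianglelefteq L_{\mathbf c}$; $h_{\mathbf c}:H_{\mathbf c}\to N_{\mathbf c}$ epimorphism with kernel $\mathcal Z(H_{\mathbf c})$ and $F_{\mathbf c}(h_{\mathbf c}(a))=(x\mapsto axa^{-1})$; $h^*_{\mathbf c}:N_{\mathbf c}\to H_{\mathbf c}$ a map with $h_{\mathbf c}\circ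 h^*_{\mathbf c}=\mathrm{id}$; $(b_1,\dots,b_n)\in Q^{\bar s}_{\mathbf c}$ iff $\sum_is_iF^{b_i}_{\mathbf c}\restriction\mathcal Z(H_{\mathbf c})=0$ ($\bar s\in\mathbb Z^n$); $\mathcal Z(H_{\mathbf c})$ reduced; $H^*_{\mathbf c}\le H_{\mathbf c}$, $H_{\mathbf c}=\bigcup_{x\in\mathcal Z(H_{\mathbf c})}H^*_{\mathbf c}x$, $\mathcal Z(H^*_{\mathbf c})=\mathcal Z(H_{\mathbf c})\cap H^*_{\mathbf c}$; $\mathbb P_{\mathbf c}$ = primes $p$ such that $\mathcal Z(H_{\mathbf c})$ has a nonzero element of $p$-power order (then so does $\mathcal Z(H^*_{\mathbf c})$) or $J_p$ embeds in $\mathcal Z(H_{\mathbf c})$ (then $J_p$ embeds in $\mathcal Z(H^*_{\mathbf c})$); $\mathcal Z(H_{\mathbf c})/\mathcal Z(H^*_{\mathbf c})$ torsion-free and $p$-divisible for all $p\notin\mathbb P_{\mathbf c}$. $\mathbf C^5_{\rm aut}$: pairs $(\mathbf c,\mathbf g)$, $\mathbf c\in\mathbf C^4_{\rm aut}$, $\mathbf g=(\mathbb G_{\mathbf g},(F^\ell_{\mathbf g})_{\ell\in L_{\mathbf c}})$ with $\mathbb G_{\mathbf g}$ reduced torsion-free abelian, no $J_p$ embeddable, $F^\ell_{\mathbf g}\in\operatorname{Aut}(\mathbb G_{\mathbf g})$, and $(b_i)\in Q^{\bar s}_{\mathbf c}\Rightarrow\sum_is_iF^{b_i}_{\mathbf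 g}=0$. $\mathbf M_{\mathbf c}$ (for $(\mathbf c,\mathbf g)\in\mathbf C^5_{\rm aut}$): pairs $(\mathbf m,\mathbf g)\in\mathbf C^5_{\rm aut}$ (same $\mathbf g$) with $L_{\mathbf m}=L_{\mathbf c}$, $N_{\mathbf m}=N_{\mathbf c}$, $H_{\mathbf c}\subseteq H_{\mathbf m}$, $h_{\mathbf c}\subseteq h_{\mathbf m}$, $h^*_{\mathbf m}=h^*_{\mathbf c}$, $F^\ell_{\mathbf c}\subseteq F^\ell_{\mathbf m}$, $Q^{\bar s}_{\mathbf m}=Q^{\bar s}_{\mathbf c}$, $H_{\mathbf m}$ generated by $\mathcal Z(H_{\mathbf m})\cup H_{\mathbf c}$, $\mathcal Z(H_{\mathbf c})=\mathcal Z(H_{\mathbf m})\cap H_{\mathbf c}$, $\mathbb P_{\mathbf m}=\mathbb P_{\mathbf c}$, $H^*_{\mathbf m}=H^*_{\mathbf c}$. $\mathbf m_1\le_{\mathbf c}\mathbf m_2$ means $H_{\mathbf m_1}\subseteq H_{\mathbf m_2}$, $h_{\mathbf m_1}\subseteq h_{\mathbf m_2}$, $F^\ell_{\mathbf m_1}\subseteq F^\ell_{\mathbf m_2}$ for all $\ell$. $\mathbf m'\in\mathbf M_{\mathbf c}$ is free over $(\mathbf c,\mathbf g)$ if there are injective homomorphisms $f_\xi:\mathbb G_{\mathbf g}\to\mathcal Z(H_{\mathbf m'})$ ($\xi<\zeta$) with $f_\xi\circ F^\ell_{\mathbf g}=F^\ell_{\mathbf m'}\circ f_\xi$ for all $\ell$,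 such that $\mathcal Z(H_{\mathbf m'})=\bigoplus_{\xi<\zeta}f_\xi(\mathbb G_{\mathbf g})\oplus\mathcal Z(H_{\mathbf c})$. $\mathbf m$ is $\mu$-free over $(\mathbf c,\mathbf g)$ if for every subgroup $G'$ of $\mathcal Z(H_{\mathbf m})/\mathcal Z(H_{\mathbf c})$ of cardinality $<\mu$ there is $\mathbf m'\in\mathbf M_{\mathbf c}$ with $\mathbf m'\le_{\mathbf c}\mathbf m$, free over $(\mathbf c,\mathbf g)$, and $G'\subseteq\mathcal Z(H_{\mathbf m'})/\mathcal Z(H_{\mathbf c})$. *)

theory Defs
  imports "HOL-Algebra.Algebra" "HOL-Computational_Algebra.Primes"
begin

definition center :: "('a, 'b) monoid_scheme \<Rightarrow> 'a set" where
  "center G = {z \<in> carrier G. \<forall>x\<in>carrier G. z \<otimes>\<^bsub>G\<^esub> x = x \<otimes>\<^bsub>G\<^esub> z}"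

definition Zgrp :: "('a, 'b) monoid_scheme \<Rightarrow> ('a, 'b) monoid_scheme" where
  "Zgrp G = G\<lparr>carrier := center G\<rparr>"

definition torsion_free :: "('a, 'b) monoid_scheme \<Rightarrow> bool" where
  "torsion_free G \<longleftrightarrow>
     (\<forall>x\<in>carrier G. \<forall>n::nat. n > 0 \<and> x [^]\<^bsub>G\<^esub> n = \<one>\<^bsub>G\<^esub> \<longrightarrow> x = \<one>\<^bsub>G\<^esub>)"

definition p_divisible :: "nat \<Rightarrow> ('a, 'b) monoid_scheme \<Rightarrow> bool" where
  "p_divisible p G \<longleftrightarrow> (\<forall>x\<in>carrier G. \<exists>y\<in>carrier G. y [^]\<^bsub>G\<^esub> p = x)"

definition divisible :: "('a, 'b) monoid_scheme \<Rightarrow> bool" where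
  "divisible G \<longleftrightarrow> (\<forall>n::nat. n > 0 \<longrightarrow> p_divisible n G)"

definition reduced :: "('a, 'b) monoid_scheme \<Rightarrow> bool" where
  "reduced G \<longleftrightarrow>
     (\<forall>D. subgroup D G \<and> divisible (G\<lparr>carrier := D\<rparr>) \<longrightarrow> D = {\<one>\<^bsub>G\<^esub>})"

definition has_p_torsion :: "nat \<Rightarrow> ('a, 'b) monoid_scheme \<Rightarrow> bool" where
  "has_p_torsion p G \<longleftrightarrow>
     (\<exists>x\<in>carrier G. x \<noteq> \<one>\<^bsub>G\<^esub> \<and> (\<exists>k::nat. x [^]\<^bsub>G\<^esub> (p ^ k) = \<one>\<^bsub>G\<^esub>))"

text \<open>The additive group of p-adic integers, as the inverse limit of the groups Z/p^n Z:
  compatible sequences of residues, with componentwise addition (written multiplicatively).\<close>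
definition Jp :: "nat \<Rightarrow> (nat \<Rightarrow> int) monoid" where
  "Jp p = \<lparr> carrier = {a. \<forall>n. 0 \<le> a n \<and> a n < int p ^ n \<and> a (Suc n) mod (int p ^ n) = a n},
            monoid.mult = (\<lambda>a b n. (a n + b n) mod (int p ^ n)),
            monoid.one = (\<lambda>n. 0) \<rparr>"

definition Jp_embeds :: "nat \<Rightarrow> ('a, 'b) monoid_scheme \<Rightarrow> bool" where
  "Jp_embeds p G \<longleftrightarrow> (\<exists>f. f \<in> hom (Jp p) G \<and> inj_on f (carrier (Jp p)))"

definition is_aut :: "('a, 'b) monoid_scheme \<Rightarrow> ('a \<Rightarrow> 'a) \<Rightarrow> bool" where
  "is_aut H \<phi> \<longleftrightarrow> \<phi> \<in> hom H H \<and> bij_betw \<phi> (carrier H) (carrier H)"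

text \<open>F : L \<rightarrow> Aut(H) an injective homomorphism (automorphisms compared on the carrier).\<close>
definition aut_action :: "('l, 'c) monoid_scheme \<Rightarrow> ('h, 'd) monoid_scheme \<Rightarrow> ('l \<Rightarrow> 'h \<Rightarrow> 'h) \<Rightarrow> bool" where
  "aut_action L H F \<longleftrightarrow>
     (\<forall>l\<in>carrier L. is_aut H (F l)) \<and>
     (\<forall>l1\<in>carrier L. \<forall>l2\<in>carrier L. \<forall>x\<in>carrier H. F (l1 \<otimes>\<^bsub>L\<^esub> l2) x = F l1 (F l2 x)) \<and>
     (\<forall>l1\<in>carrier L. \<forall>l2\<in>carrier L. (\<forall>x\<in>carrier H. F l1 x = F l2 x) \<longrightarrow> l1 = l2)"

text \<open>sum_i s_i F^{b_i} evaluated at z (in multiplicative notation: product of (F^{b_i} z)^{s_i}).\<close>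
definition lincomb :: "('a, 'b) monoid_scheme \<Rightarrow> ('l \<Rightarrow> 'a \<Rightarrow> 'a) \<Rightarrow> int list \<Rightarrow> 'l list \<Rightarrow> 'a \<Rightarrow> 'a" where
  "lincomb K F ss bs z =
     foldr (\<lambda>(s, b) acc. (F b z [^]\<^bsub>K\<^esub> s) \<otimes>\<^bsub>K\<^esub> acc) (zip ss bs) \<one>\<^bsub>K\<^esub>"

record ('l, 'h) c4rec =
  cL :: "'l monoid"
  cN :: "'l set"
  cH :: "'h monoid"
  ch :: "'h \<Rightarrow> 'l"
  chstar :: "'l \<Rightarrow> 'h"
  cF :: "'l \<Rightarrow> 'h \<Rightarrow> 'h"
  cHstar :: "'h set"
  cP :: "nat set"

record ('l, 'g) grec =
  gG :: "'g monoid"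
  gF :: "'l \<Rightarrow> 'g \<Rightarrow> 'g"

definition Qrel :: "('l, 'h) c4rec \<Rightarrow> int list \<Rightarrow> 'l list \<Rightarrow> bool" where
  "Qrel c ss bs \<longleftrightarrow>
     length ss = length bs \<and> set bs \<subseteq> carrier (cL c) \<and>
     (\<forall>z\<in>center (cH c). lincomb (cH c) (cF c) ss bs z = \<one>\<^bsub>cH c\<^esub>)"

definition C4aut :: "('l, 'h) c4rec \<Rightarrow> bool" where
  "C4aut c \<longleftrightarrow>
     group (cL c) \<and> group (cH c) \<and>
     aut_action (cL c) (cH c) (cF c) \<and>
     cN c \<lhd> cL c \<and>
     ch c \<in> hom (cH c) (cL c) \<and> ch c ` carrier (cH c) = cN c \<and>
     kernel (cH c) (cL c) (ch c) = center (cH c) \<and>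
     (\<forall>a\<in>carrier (cH c). \<forall>x\<in>carrier (cH c).
         cF c (ch c a) x = a \<otimes>\<^bsub>cH c\<^esub> x \<otimes>\<^bsub>cH c\<^esub> inv\<^bsub>cH c\<^esub> a) \<and>
     (\<forall>n\<in>cN c. chstar c n \<in> carrier (cH c) \<and> ch c (chstar c n) = n) \<and>
     reduced (Zgrp (cH c)) \<and>
     subgroup (cHstar c) (cH c) \<and>
     carrier (cH c) = (\<Union>x\<in>center (cH c). cHstar c #>\<^bsub>cH c\<^esub> x) \<and>
     center ((cH c)\<lparr>carrier := cHstar c\<rparr>) = center (cH c) \<inter> cHstar c \<and>
     (\<forall>p. p \<in> cP c \<longleftrightarrow> Factorial_Ring.prime p \<and> (has_p_torsion p (Zgrp (cH c)) \<or> Jp_embeds p (Zgrp (cH c)))) \<and>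
     (\<forall>p. Factorial_Ring.prime p \<and> has_p_torsion p (Zgrp (cH c)) \<longrightarrow>
          has_p_torsion p (Zgrp ((cH c)\<lparr>carrier := cHstar c\<rparr>))) \<and>
     (\<forall>p. Factorial_Ring.prime p \<and> Jp_embeds p (Zgrp (cH c)) \<longrightarrow>
          Jp_embeds p (Zgrp ((cH c)\<lparr>carrier := cHstar c\<rparr>))) \<and>
     torsion_free (Zgrp (cH c) Mod center ((cH c)\<lparr>carrier := cHstar c\<rparr>)) \<and>
     (\<forall>p. Factorial_Ring.prime p \<and> p \<notin> cP c \<longrightarrow>
          p_divisible p (Zgrp (cH c) Mod center ((cH c)\<lparr>carrier := cHstar c\<rparr>)))"

definition C5aut :: "('l, 'h) c4rec \<Rightarrow> ('l, 'g) grec \<Rightarrow> bool" where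
  "C5aut c g \<longleftrightarrow>
     C4aut c \<and>
     comm_group (gG g) \<and> reduced (gG g) \<and> torsion_free (gG g) \<and>
     (\<forall>p. Factorial_Ring.prime p \<longrightarrow> \<not> Jp_embeds p (gG g)) \<and>
     (\<forall>l\<in>carrier (cL c). is_aut (gG g) (gF g l)) \<and>
     (\<forall>ss bs. Qrel c ss bs \<longrightarrow> (\<forall>x\<in>carrier (gG g). lincomb (gG g) (gF g) ss bs x = \<one>\<^bsub>gG g\<^esub>))"

definition subgrp_ext :: "'h monoid \<Rightarrow> 'h monoid \<Rightarrow> bool" where
  "subgrp_ext H H' \<longleftrightarrow>
     carrier H \<subseteq> carrier H' \<and> \<one>\<^bsub>H\<^esub> = \<one>\<^bsub>H'\<^esub> \<and>
     (\<forall>x\<in>carrier H. \<forall>y\<in>carrier H. x \<otimes>\<^bsub>H\<^esub> y = x \<otimes>\<^bsub>H'\<^esub> y)"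

definition Mset :: "('l, 'h) c4rec \<Rightarrow> ('l, 'g) grec \<Rightarrow> ('l, 'h) c4rec \<Rightarrow> bool" where
  "Mset c g m \<longleftrightarrow>
     C5aut m g \<and>
     cL m = cL c \<and> cN m = cN c \<and>
     subgrp_ext (cH c) (cH m) \<and>
     (\<forall>a\<in>carrier (cH c). ch m a = ch c a) \<and>
     (\<forall>n\<in>cN c. chstar m n = chstar c n) \<and>
     (\<forall>l\<in>carrier (cL c). \<forall>x\<in>carrier (cH c). cF m l x = cF c l x) \<and>
     (\<forall>ss bs. Qrel m ss bs \<longleftrightarrow> Qrel c ss bs) \<and>
     carrier (cH m) = generate (cH m) (center (cH m) \<union> carrier (cH c)) \<and>
     center (cH c) = center (cH m) \<inter> carrier (cH c) \<and>
     cP m = cP c \<and> cHstar m = cHstar c"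

definition le_c :: "('l, 'h) c4rec \<Rightarrow> ('l, 'h) c4rec \<Rightarrow> ('l, 'h) c4rec \<Rightarrow> bool" where
  "le_c c m1 m2 \<longleftrightarrow>
     subgrp_ext (cH m1) (cH m2) \<and>
     (\<forall>a\<in>carrier (cH m1). ch m2 a = ch m1 a) \<and>
     (\<forall>l\<in>carrier (cL c). \<forall>x\<in>carrier (cH m1). cF m2 l x = cF m1 l x)"

text \<open>m' is free over (c,g): Z(H_m') is the internal direct sum of copies f_i(G_g) (i \<in> I)
  and Z(H_c), with each f_i an injective homomorphism commuting with the actions.
  The index set is taken inside the type 'h (no loss).\<close>
definition free_over :: "('l, 'h) c4rec \<Rightarrow> ('l, 'g) grec \<Rightarrow> ('l, 'h) c4rec \<Rightarrow> bool" where
  "free_over c g m' \<longleftrightarrow>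
     (\<exists>(I :: 'h set) (f :: 'h \<Rightarrow> 'g \<Rightarrow> 'h).
        (\<forall>i\<in>I. f i \<in> hom (gG g) (Zgrp (cH m')) \<and> inj_on (f i) (carrier (gG g)) \<and>
               (\<forall>l\<in>carrier (cL c). \<forall>x\<in>carrier (gG g). f i (gF g l x) = cF m' l (f i x))) \<and>
        (\<forall>z\<in>center (cH m').
           \<exists>!(a, y). a \<in> (I \<rightarrow>\<^sub>E carrier (gG g)) \<and> finite {i\<in>I. a i \<noteq> \<one>\<^bsub>gG g\<^esub>} \<and>
                     y \<in> center (cH c) \<and>
                     z = finprod (Zgrp (cH m')) (\<lambda>i. f i (a i)) {i\<in>I. a i \<noteq> \<one>\<^bsub>gG g\<^esub>}
                           \<otimes>\<^bsub>cH m'\<^esub> y))"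

text \<open>m is mu-free over (c,g); mu is a cardinal, given as a well-order relation.\<close>
definition mu_free :: "('l, 'h) c4rec \<Rightarrow> ('l, 'g) grec \<Rightarrow> 'x rel \<Rightarrow> ('l, 'h) c4rec \<Rightarrow> bool" where
  "mu_free c g mu m \<longleftrightarrow>
     (\<forall>G'. subgroup G' (Zgrp (cH m) Mod center (cH c)) \<and> |G'| <o mu \<longrightarrow>
        (\<exists>m'. Mset c g m' \<and> le_c c m' m \<and> free_over c g m' \<and>
              G' \<subseteq> {center (cH c) #>\<^bsub>Zgrp (cH m)\<^esub> x | x. x \<in> center (cH m')}))"

end

theory Submission
  imports Defs
begin

lemma (in group) center_subgroup: "subgroup (center G) G"
proof (rule subgroupI)
  show "center G \<subseteq> carrier G" by (auto simp: center_def)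
  show "center G \<noteq> {}" using one_closed by (auto simp: center_def)
  fix a assume a: "a \<in> center G"
  then have ac: "a \<in> carrier G" by (auto simp: center_def)
  show "inv a \<in> center G" unfolding center_def
  proof (safe)
    show "inv a \<in> carrier G" using ac by simp
    fix x assume x: "x \<in> carrier G"
    have "a \<otimes> x = x \<otimes> a" using a x by (auto simp: center_def)
    then have e: "x \<otimes> a = a \<otimes> x" by simp
    have "inv a \<otimes> x = inv a \<otimes> (x \<otimes> a) \<otimes> inv a" using ac x by (simp add: m_assoc)
    also have "\<dots> = inv a \<otimes> (a \<otimes> x) \<otimes> inv a" by (simp only: e)
    also have "\<dots> = x \<otimes> inv a" using ac x by (simp flip: m_assoc)
    finally show "inv a \<otimes> x = x \<otimes> inv a" .
  qed
next
  fix a b assume a: "a \<in> center G" and b: "b \<in> center G"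
  then have ac: "a \<in> carrier G" "b \<in> carrier G" by (auto simp: center_def)
  show "a \<otimes> b \<in> center G" unfolding center_def
  proof safe
    show "a \<otimes> b \<in> carrier G" using ac by simp
    fix x assume x: "x \<in> carrier G"
    have 1: "b \<otimes> x = x \<otimes> b" using b x by (auto simp: center_def)
    have 2: "a \<otimes> x = x \<otimes> a" using a x by (auto simp: center_def)
    have "a \<otimes> b \<otimes> x = a \<otimes> (x \<otimes> b)" using ac x 1 by (simp add: m_assoc)
    also have "\<dots> = x \<otimes> a \<otimes> b" using ac x 2 by (simp flip: m_assoc)
    finally show "a \<otimes> b \<otimes> x = x \<otimes> (a \<otimes> b)" using ac x by (simp add: m_assoc)
  qed
qed

lemma (in group) Zgrp_comm: "comm_group (Zgrp G)"
proof -
  have "group (Zgrp G)" unfolding Zgrp_def by (rule subgroup_imp_group[OF center_subgroup])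
  then show ?thesis
  proof (rule group.group_comm_groupI)
    fix x y assume xy: "x \<in> carrier (Zgrp G)" "y \<in> carrier (Zgrp G)"
    show "x \<otimes>\<^bsub>Zgrp G\<^esub> y = y \<otimes>\<^bsub>Zgrp G\<^esub> x"
    proof -
      from xy have "x \<in> center G" "y \<in> center G" by (simp_all add: Zgrp_def)
      then have "x \<otimes> y = y \<otimes> x" unfolding center_def by blast
      then show ?thesis by (simp add: Zgrp_def)
    qed
  qed
qed

lemma subgrp_ext_subgroup:
  assumes "group K" "group G" "subgrp_ext K G"
  shows "subgroup (carrier K) G"
proof -
  interpret K: group K by fact
  interpret G: group G by fact
  have e: "carrier K \<subseteq> carrier G" "\<one>\<^bsub>K\<^esub> = \<one>\<^bsub>G\<^esub>"
     "\<And>x y. x \<in> carrier K \<Longrightarrow> y \<in> carrier K \<Longrightarrow> x \<otimes>\<^bsub>K\<^esub> y = x \<otimes>\<^bsub>G\<^esub> y"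
    using assms(3) by (auto simp: subgrp_ext_def)
  have inv: "inv\<^bsub>G\<^esub> x = inv\<^bsub>K\<^esub> x" if x: "x \<in> carrier K" for x
  proof (rule G.inv_equality)
    show "inv\<^bsub>K\<^esub> x \<otimes>\<^bsub>G\<^esub> x = \<one>\<^bsub>G\<^esub>" using x e(3)[of "inv\<^bsub>K\<^esub> x" x] e(2) by simp
  qed (use x e(1) in auto)
  show ?thesis
  proof (rule G.subgroupI)
    fix a b assume "a \<in> carrier K" "b \<in> carrier K"
    then show "a \<otimes>\<^bsub>G\<^esub> b \<in> carrier K" by (metis K.m_closed e(3))
  qed (use e inv in auto)
qed


lemma decomp_mult:
  assumes ZG: "comm_group Z" and GG: "comm_group G"
    and fh: "\<forall>i\<in>I. f i \<in> hom G Z"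
    and a1: "a1 \<in> I \<rightarrow>\<^sub>E carrier G" "finite {i\<in>I. a1 i \<noteq> \<one>\<^bsub>G\<^esub>}"
    and a2: "a2 \<in> I \<rightarrow>\<^sub>E carrier G" "finite {i\<in>I. a2 i \<noteq> \<one>\<^bsub>G\<^esub>}"
    and y: "y1 \<in> carrier Z" "y2 \<in> carrier Z"
  shows "(finprod Z (\<lambda>i. f i (a1 i)) {i\<in>I. a1 i \<noteq> \<one>\<^bsub>G\<^esub>} \<otimes>\<^bsub>Z\<^esub> y1) \<otimes>\<^bsub>Z\<^esub>
         (finprod Z (\<lambda>i. f i (a2 i)) {i\<in>I. a2 i \<noteq> \<one>\<^bsub>G\<^esub>} \<otimes>\<^bsub>Z\<^esub> y2)
       = finprod Z (\<lambda>i. f i ((\<lambda>i\<in>I. a1 i \<otimes>\<^bsub>G\<^esub> a2 i) i))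
           {i\<in>I. (\<lambda>i\<in>I. a1 i \<otimes>\<^bsub>G\<^esub> a2 i) i \<noteq> \<one>\<^bsub>G\<^esub>} \<otimes>\<^bsub>Z\<^esub> (y1 \<otimes>\<^bsub>Z\<^esub> y2)"
proof -
  interpret Z: comm_group Z by fact
  interpret G: comm_group G by fact
  define a where "a = (\<lambda>i\<in>I. a1 i \<otimes>\<^bsub>G\<^esub> a2 i)"
  define S1 where "S1 = {i\<in>I. a1 i \<noteq> \<one>\<^bsub>G\<^esub>}"
  define S2 where "S2 = {i\<in>I. a2 i \<noteq> \<one>\<^bsub>G\<^esub>}"
  define S where "S = {i\<in>I. a i \<noteq> \<one>\<^bsub>G\<^esub>}"
  define T where "T = S1 \<union> S2"
  have fT: "finite T" using a1 a2 by (simp add: T_def S1_def S2_def)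
  have TI: "T \<subseteq> I" by (auto simp: T_def S1_def S2_def)
  have ST: "S \<subseteq> T" by (auto simp: S_def T_def S1_def S2_def a_def)
  have a1c: "\<And>i. i \<in> I \<Longrightarrow> a1 i \<in> carrier G" using a1 by auto
  have a2c: "\<And>i. i \<in> I \<Longrightarrow> a2 i \<in> carrier G" using a2 by auto
  have fc: "\<And>i x. i \<in> I \<Longrightarrow> x \<in> carrier G \<Longrightarrow> f i x \<in> carrier Z"
    using fh by (auto simp: hom_def Pi_def)
  have f1: "f i \<one>\<^bsub>G\<^esub> = \<one>\<^bsub>Z\<^esub>" if "i \<in> I" for i
    using hom_one[OF bspec[OF fh that] G.is_group Z.is_group] .
  have fm: "\<And>i x y. i \<in> I \<Longrightarrow> x \<in> carrier G \<Longrightarrow> y \<in> carrier G \<Longrightarrow>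
      f i (x \<otimes>\<^bsub>G\<^esub> y) = f i x \<otimes>\<^bsub>Z\<^esub> f i y"
    using hom_mult[OF bspec[OF fh]] by simp
  have e1: "finprod Z (\<lambda>i. f i (a1 i)) S1 = finprod Z (\<lambda>i. f i (a1 i)) T"
    by (rule Z.finprod_mono_neutral_cong_left)
       (use fT TI a1c fc f1 in \<open>auto simp: T_def S1_def\<close>)
  have e2: "finprod Z (\<lambda>i. f i (a2 i)) S2 = finprod Z (\<lambda>i. f i (a2 i)) T"
    by (rule Z.finprod_mono_neutral_cong_left)
       (use fT TI a2c fc f1 in \<open>auto simp: T_def S2_def\<close>)
  have e3: "finprod Z (\<lambda>i. f i (a i)) S = finprod Z (\<lambda>i. f i (a i)) T"
  proof (rule Z.finprod_mono_neutral_cong_left)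
    show "\<And>i. i \<in> T - S \<Longrightarrow> f i (a i) = \<one>\<^bsub>Z\<^esub>" using TI f1 by (auto simp: S_def)
    show "(\<lambda>i. f i (a i)) \<in> T \<rightarrow> carrier Z" using TI fc a1c a2c by (auto simp: a_def)
  qed (use fT ST in auto)
  have e4: "finprod Z (\<lambda>i. f i (a i)) T = finprod Z (\<lambda>i. f i (a1 i) \<otimes>\<^bsub>Z\<^esub> f i (a2 i)) T"
    by (rule Z.finprod_cong') (use TI fc a1c a2c fm in \<open>auto simp: a_def\<close>)
  have e5: "finprod Z (\<lambda>i. f i (a1 i) \<otimes>\<^bsub>Z\<^esub> f i (a2 i)) T
      = finprod Z (\<lambda>i. f i (a1 i)) T \<otimes>\<^bsub>Z\<^esub> finprod Z (\<lambda>i. f i (a2 i)) T"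
    by (rule Z.finprod_multf) (use TI fc a1c a2c in auto)
  have c1: "finprod Z (\<lambda>i. f i (a1 i)) T \<in> carrier Z"
    by (rule Z.finprod_closed) (use TI fc a1c in auto)
  have c2: "finprod Z (\<lambda>i. f i (a2 i)) T \<in> carrier Z"
    by (rule Z.finprod_closed) (use TI fc a2c in auto)
  show ?thesis
    unfolding a_def[symmetric] S1_def[symmetric] S2_def[symmetric] S_def[symmetric]
    unfolding e1 e2 e3 e4 e5
    using c1 c2 y by (simp add: Z.m_ac)
qed


lemma Zgrp_simps [simp]:
  "carrier (Zgrp H) = center H" "monoid.mult (Zgrp H) = monoid.mult H" "one (Zgrp H) = one H"
  by (simp_all add: Zgrp_def)

theorem lemma4p3:
  fixes c :: "('l, 'h) c4rec" and g :: "('l, 'g) grec" and m :: "('l, 'h) c4rec"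
  assumes "C5aut c g"
    and "\<forall>\<phi>\<in>hom ((cL c)\<lparr>carrier := cN c\<rparr>) (gG g). \<forall>x\<in>cN c. \<phi> x = \<one>\<^bsub>gG g\<^esub>"
    and "Mset c g m"
    and "mu_free c g (cardSuc (card_of (cN c))) m"
  shows "\<forall>\<phi>\<in>hom ((cL c)\<lparr>carrier := cN c\<rparr>) (Zgrp (cH m)). \<phi> ` cN c \<subseteq> carrier (cH c)"
proof (intro ballI subsetI)
  fix \<phi> w
  assume \<phi>: "\<phi> \<in> hom ((cL c)\<lparr>carrier := cN c\<rparr>) (Zgrp (cH m))" and w: "w \<in> \<phi> ` cN c"
  have C4c: "C4aut c" and GG: "comm_group (gG g)" using assms(1) by (auto simp: C5aut_def)
  have grLc: "group (cL c)" and grHc: "group (cH c)" and norN: "cN c \<lhd> cL c"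
    using C4c by (auto simp: C4aut_def)
  have grN: "group ((cL c)\<lparr>carrier := cN c\<rparr>)"
    using group.subgroup_imp_group[OF grLc normal_imp_subgroup[OF norN]] .
  have grHm: "group (cH m)" using assms(3) by (auto simp: Mset_def C5aut_def C4aut_def)
  have ext_cm: "subgrp_ext (cH c) (cH m)" and cen_cm: "center (cH c) = center (cH m) \<inter> carrier (cH c)"
    using assms(3) by (auto simp: Mset_def)
  have sub1: "subgroup (center (cH c)) (cH m)"
    unfolding cen_cm
    by (rule group.subgroups_Inter_pair[OF grHm group.center_subgroup[OF grHm]
          subgrp_ext_subgroup[OF grHc grHm ext_cm]])
  have subZ: "subgroup (center (cH c)) (Zgrp (cH m))"
    unfolding Zgrp_def
    by (rule group.subgroup_incl[OF grHm sub1 group.center_subgroup[OF grHm]]) (use cen_cm in auto)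
  have ZmC: "comm_group (Zgrp (cH m))" by (rule group.Zgrp_comm[OF grHm])
  have nor: "center (cH c) \<lhd> Zgrp (cH m)"
    by (rule comm_group.subgroup_imp_normal[OF ZmC subZ])
  define hc where "hc = (\<lambda>a. center (cH c) #>\<^bsub>Zgrp (cH m)\<^esub> a) \<circ> \<phi>"
  have hc_hom: "hc \<in> hom ((cL c)\<lparr>carrier := cN c\<rparr>) (Zgrp (cH m) Mod center (cH c))"
    unfolding hc_def by (rule hom_compose[OF \<phi> normal.r_coset_hom_Mod[OF nor]])
  have "group_hom ((cL c)\<lparr>carrier := cN c\<rparr>) (Zgrp (cH m) Mod center (cH c)) hc"
    unfolding group_hom_def group_hom_axioms_def
    using grN normal.factorgroup_is_group[OF nor] hc_hom by simp
  then have subG': "subgroup (hc ` cN c) (Zgrp (cH m) Mod center (cH c))"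
    using group_hom.img_is_subgroup by fastforce
  have cardG': "|hc ` cN c| <o cardSuc |cN c|"
    using ordLeq_ordLess_trans[OF card_of_image cardSuc_greater[OF card_of_Card_order]] .
  obtain m' where m': "Mset c g m'" "le_c c m' m" "free_over c g m'"
    and G'sub: "hc ` cN c \<subseteq> {center (cH c) #>\<^bsub>Zgrp (cH m)\<^esub> x | x. x \<in> center (cH m')}"
    using assms(4) subG' cardG' unfolding mu_free_def by blast
  have grHm': "group (cH m')" using m'(1) by (auto simp: Mset_def C5aut_def C4aut_def)
  have ext_cm': "subgrp_ext (cH c) (cH m')" and cen_cm': "center (cH c) = center (cH m') \<inter> carrier (cH c)"
    using m'(1) by (auto simp: Mset_def)
  have ext_m'm: "subgrp_ext (cH m') (cH m)" using m'(2) by (simp add: le_c_def)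
  have carr_cm': "carrier (cH c) \<subseteq> carrier (cH m')" using ext_cm' by (simp add: subgrp_ext_def)
  have carr_m'm: "carrier (cH m') \<subseteq> carrier (cH m)" using ext_m'm by (simp add: subgrp_ext_def)
  have mul_m'm: "\<And>x y. x \<in> carrier (cH m') \<Longrightarrow> y \<in> carrier (cH m') \<Longrightarrow> x \<otimes>\<^bsub>cH m\<^esub> y = x \<otimes>\<^bsub>cH m'\<^esub> y"
    using ext_m'm by (simp add: subgrp_ext_def)
  have mul_cm': "\<And>x y. x \<in> carrier (cH c) \<Longrightarrow> y \<in> carrier (cH c) \<Longrightarrow> x \<otimes>\<^bsub>cH c\<^esub> y = x \<otimes>\<^bsub>cH m'\<^esub> y"
    using ext_cm' by (simp add: subgrp_ext_def)
  have one_cm: "\<one>\<^bsub>cH c\<^esub> = \<one>\<^bsub>cH m\<^esub>" using ext_cm by (simp add: subgrp_ext_def)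
  have \<phi>c: "\<phi> n \<in> center (cH m)" if "n \<in> cN c" for n
    using \<phi> that by (auto simp: hom_def Pi_def)
  have \<phi>m': "\<phi> n \<in> center (cH m')" if n: "n \<in> cN c" for n
  proof -
    have "hc n \<in> hc ` cN c" using n by simp
    with G'sub obtain x where x: "x \<in> center (cH m')"
      and eq: "center (cH c) #>\<^bsub>Zgrp (cH m)\<^esub> \<phi> n = center (cH c) #>\<^bsub>Zgrp (cH m)\<^esub> x"
      unfolding hc_def by auto
    have pc: "\<phi> n \<in> carrier (cH m)" using \<phi>c[OF n] by (simp add: center_def)
    have "\<one>\<^bsub>cH c\<^esub> \<in> center (cH c)"
      using subgroup.one_closed[OF group.center_subgroup[OF grHc]] .
    moreover have "\<one>\<^bsub>cH c\<^esub> \<otimes>\<^bsub>cH m\<^esub> \<phi> n = \<phi> n" using one_cm pc grHm by (simp add: group.is_monoid)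
    ultimately have "\<phi> n \<in> center (cH c) #>\<^bsub>Zgrp (cH m)\<^esub> \<phi> n"
      unfolding r_coset_def by force
    then have "\<phi> n \<in> center (cH c) #>\<^bsub>Zgrp (cH m)\<^esub> x" using eq by simp
    then obtain z where z: "z \<in> center (cH c)" and pz: "\<phi> n = z \<otimes>\<^bsub>cH m\<^esub> x"
      unfolding r_coset_def by auto
    have zc: "z \<in> carrier (cH m')" using z carr_cm' by (auto simp: center_def)
    have xc: "x \<in> carrier (cH m')" using x by (auto simp: center_def)
    have pz': "\<phi> n = z \<otimes>\<^bsub>cH m'\<^esub> x" using pz mul_m'm[OF zc xc] by simp
    have pcm': "\<phi> n \<in> carrier (cH m')" using pz' zc xc grHm' by (simp add: group.is_monoid monoid.m_closed)
    have "\<phi> n \<otimes>\<^bsub>cH m'\<^esub> v = v \<otimes>\<^bsub>cH m'\<^esub> \<phi> n" if v: "v \<in> carrier (cH m')" for v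
    proof -
      have "v \<in> carrier (cH m)" using v carr_m'm by auto
      then have "\<phi> n \<otimes>\<^bsub>cH m\<^esub> v = v \<otimes>\<^bsub>cH m\<^esub> \<phi> n" using \<phi>c[OF n] unfolding center_def by blast
      then show ?thesis using mul_m'm[OF pcm' v] mul_m'm[OF v pcm'] by simp
    qed
    then show ?thesis using pcm' unfolding center_def by blast
  qed
  obtain I :: "'h set" and f :: "'h \<Rightarrow> 'g \<Rightarrow> 'h" where
    fh0: "\<forall>i\<in>I. f i \<in> hom (gG g) (Zgrp (cH m')) \<and> inj_on (f i) (carrier (gG g)) \<and>
               (\<forall>l\<in>carrier (cL c). \<forall>x\<in>carrier (gG g). f i (gF g l x) = cF m' l (f i x))"
    and dec: "\<forall>z\<in>center (cH m').
           \<exists>!(a, y). a \<in> (I \<rightarrow>\<^sub>E carrier (gG g)) \<and> finite {i\<in>I. a i \<noteq> \<one>\<^bsub>gG g\<^esub>} \<and>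
                     y \<in> center (cH c) \<and>
                     z = finprod (Zgrp (cH m')) (\<lambda>i. f i (a i)) {i\<in>I. a i \<noteq> \<one>\<^bsub>gG g\<^esub>}
                           \<otimes>\<^bsub>cH m'\<^esub> y"
    using m'(3) unfolding free_over_def by blast
  have fh: "\<forall>i\<in>I. f i \<in> hom (gG g) (Zgrp (cH m'))" using fh0 by blast
  define Q where "Q = (\<lambda>z (a, y). a \<in> (I \<rightarrow>\<^sub>E carrier (gG g)) \<and> finite {i\<in>I. a i \<noteq> \<one>\<^bsub>gG g\<^esub>} \<and>
                     y \<in> center (cH c) \<and>
                     z = finprod (Zgrp (cH m')) (\<lambda>i. f i (a i)) {i\<in>I. a i \<noteq> \<one>\<^bsub>gG g\<^esub>}
                           \<otimes>\<^bsub>cH m'\<^esub> y)"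
  define D where "D = (\<lambda>z. THE p. Q z p)"
  have dec': "\<exists>!p. Q z p" if "z \<in> center (cH m')" for z
    using dec that unfolding Q_def by blast
  have DQ: "Q z (D z)" if "z \<in> center (cH m')" for z
    unfolding D_def by (rule theI'[OF dec'[OF that]])
  have Duniq: "D z = p" if "z \<in> center (cH m')" "Q z p" for z p
    unfolding D_def by (rule the1_equality[OF dec'[OF that(1)] that(2)])
  define \<pi> where "\<pi> = (\<lambda>i z. fst (D z) i)"
  have ZC: "comm_group (Zgrp (cH m'))" by (rule group.Zgrp_comm[OF grHm'])
  have cen_sub: "center (cH c) \<subseteq> center (cH m')" using cen_cm' by blast
  have cenc_sub: "subgroup (center (cH c)) (cH c)" by (rule group.center_subgroup[OF grHc])
  have MG: "monoid (gG g)" using GG by (simp add: comm_group_def group_def)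
  have \<pi>hom: "\<pi> i \<in> hom (Zgrp (cH m')) (gG g)" if i: "i \<in> I" for i
  proof -
    have cl: "\<pi> i z \<in> carrier (gG g)" if z: "z \<in> center (cH m')" for z
      using DQ[OF z] i unfolding \<pi>_def Q_def by (cases "D z") auto
    have ml: "\<pi> i (z1 \<otimes>\<^bsub>cH m'\<^esub> z2) = \<pi> i z1 \<otimes>\<^bsub>gG g\<^esub> \<pi> i z2"
      if z1: "z1 \<in> center (cH m')" and z2: "z2 \<in> center (cH m')" for z1 z2
    proof -
      obtain a1 y1 where d1: "D z1 = (a1, y1)" by (cases "D z1")
      obtain a2 y2 where d2: "D z2 = (a2, y2)" by (cases "D z2")
      have q1: "Q z1 (a1, y1)" using DQ[OF z1] d1 by simp
      have q2: "Q z2 (a2, y2)" using DQ[OF z2] d2 by simp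
      have A1: "a1 \<in> I \<rightarrow>\<^sub>E carrier (gG g)" "finite {i\<in>I. a1 i \<noteq> \<one>\<^bsub>gG g\<^esub>}" "y1 \<in> center (cH c)"
        and E1: "z1 = finprod (Zgrp (cH m')) (\<lambda>i. f i (a1 i)) {i\<in>I. a1 i \<noteq> \<one>\<^bsub>gG g\<^esub>} \<otimes>\<^bsub>cH m'\<^esub> y1"
        using q1 unfolding Q_def by auto
      have A2: "a2 \<in> I \<rightarrow>\<^sub>E carrier (gG g)" "finite {i\<in>I. a2 i \<noteq> \<one>\<^bsub>gG g\<^esub>}" "y2 \<in> center (cH c)"
        and E2: "z2 = finprod (Zgrp (cH m')) (\<lambda>i. f i (a2 i)) {i\<in>I. a2 i \<noteq> \<one>\<^bsub>gG g\<^esub>} \<otimes>\<^bsub>cH m'\<^esub> y2"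
        using q2 unfolding Q_def by auto
      define a where "a = (\<lambda>i\<in>I. a1 i \<otimes>\<^bsub>gG g\<^esub> a2 i)"
      have y1c: "y1 \<in> carrier (cH c)" "y2 \<in> carrier (cH c)" using A1(3) A2(3) by (auto simp: center_def)
      have yy: "y1 \<otimes>\<^bsub>cH m'\<^esub> y2 \<in> center (cH c)"
        using subgroup.m_closed[OF cenc_sub A1(3) A2(3)] mul_cm'[OF y1c] by simp
      have aP: "a \<in> I \<rightarrow>\<^sub>E carrier (gG g)"
        using A1(1) A2(1) unfolding a_def by (auto intro!: monoid.m_closed[OF MG])
      have fin: "finite {i\<in>I. a i \<noteq> \<one>\<^bsub>gG g\<^esub>}"
      proof (rule finite_subset[OF _ finite_UnI[OF A1(2) A2(2)]])
        show "{i\<in>I. a i \<noteq> \<one>\<^bsub>gG g\<^esub>} \<subseteq> {i\<in>I. a1 i \<noteq> \<one>\<^bsub>gG g\<^esub>} \<union> {i\<in>I. a2 i \<noteq> \<one>\<^bsub>gG g\<^esub>}"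
          unfolding a_def by (auto simp: monoid.l_one[OF MG] monoid.one_closed[OF MG])
      qed
      have eq: "z1 \<otimes>\<^bsub>cH m'\<^esub> z2 = finprod (Zgrp (cH m')) (\<lambda>i. f i (a i)) {i\<in>I. a i \<noteq> \<one>\<^bsub>gG g\<^esub>}
                           \<otimes>\<^bsub>cH m'\<^esub> (y1 \<otimes>\<^bsub>cH m'\<^esub> y2)"
      proof -
        have yZ: "y1 \<in> carrier (Zgrp (cH m'))" "y2 \<in> carrier (Zgrp (cH m'))"
          using A1(3) A2(3) cen_sub by auto
        note dm = decomp_mult[OF ZC GG fh A1(1,2) A2(1,2) yZ]
        have "z1 \<otimes>\<^bsub>cH m'\<^esub> z2 = (finprod (Zgrp (cH m')) (\<lambda>i. f i (a1 i)) {i\<in>I. a1 i \<noteq> \<one>\<^bsub>gG g\<^esub>} \<otimes>\<^bsub>cH m'\<^esub> y1)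
           \<otimes>\<^bsub>cH m'\<^esub> (finprod (Zgrp (cH m')) (\<lambda>i. f i (a2 i)) {i\<in>I. a2 i \<noteq> \<one>\<^bsub>gG g\<^esub>} \<otimes>\<^bsub>cH m'\<^esub> y2)"
          using E1 E2 by simp
        also have "\<dots> = finprod (Zgrp (cH m')) (\<lambda>i. f i (a i)) {i\<in>I. a i \<noteq> \<one>\<^bsub>gG g\<^esub>}
                           \<otimes>\<^bsub>cH m'\<^esub> (y1 \<otimes>\<^bsub>cH m'\<^esub> y2)"
          using dm by (simp only: Zgrp_simps a_def)
        finally show ?thesis .
      qed
      have z12: "z1 \<otimes>\<^bsub>cH m'\<^esub> z2 \<in> center (cH m')"
        using subgroup.m_closed[OF group.center_subgroup[OF grHm'] z1 z2] .
      have "Q (z1 \<otimes>\<^bsub>cH m'\<^esub> z2) (a, y1 \<otimes>\<^bsub>cH m'\<^esub> y2)"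
        unfolding Q_def using aP fin yy eq by simp
      then have "D (z1 \<otimes>\<^bsub>cH m'\<^esub> z2) = (a, y1 \<otimes>\<^bsub>cH m'\<^esub> y2)" by (rule Duniq[OF z12])
      then show ?thesis unfolding \<pi>_def using d1 d2 i by (simp add: a_def)
    qed
    show ?thesis unfolding hom_def using cl ml by auto
  qed
  have \<phi>hom': "\<phi> \<in> hom ((cL c)\<lparr>carrier := cN c\<rparr>) (Zgrp (cH m'))"
  proof -
    have "\<phi> (x \<otimes>\<^bsub>cL c\<^esub> y) = \<phi> x \<otimes>\<^bsub>cH m'\<^esub> \<phi> y" if "x \<in> cN c" "y \<in> cN c" for x y
    proof -
      have "\<phi> (x \<otimes>\<^bsub>cL c\<^esub> y) = \<phi> x \<otimes>\<^bsub>cH m\<^esub> \<phi> y"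
        using hom_mult[OF \<phi>, of x y] that by simp
      moreover have "\<phi> x \<in> carrier (cH m')" "\<phi> y \<in> carrier (cH m')"
        using \<phi>m' that by (auto simp: center_def)
      ultimately show ?thesis using mul_m'm by simp
    qed
    then show ?thesis unfolding hom_def using \<phi>m' by auto
  qed
  obtain n where n: "n \<in> cN c" and wn: "w = \<phi> n" using w by blast
  have triv: "\<pi> i (\<phi> n) = \<one>\<^bsub>gG g\<^esub>" if i: "i \<in> I" for i
  proof -
    have "\<pi> i \<circ> \<phi> \<in> hom ((cL c)\<lparr>carrier := cN c\<rparr>) (gG g)"
      by (rule hom_compose[OF \<phi>hom' \<pi>hom[OF i]])
    then show ?thesis using assms(2) n by auto
  qed
  obtain a y where d: "D (\<phi> n) = (a, y)" by (cases "D (\<phi> n)")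
  have q: "Q (\<phi> n) (a, y)" using DQ[OF \<phi>m'[OF n]] d by simp
  have yc: "y \<in> center (cH c)"
    and E: "\<phi> n = finprod (Zgrp (cH m')) (\<lambda>i. f i (a i)) {i\<in>I. a i \<noteq> \<one>\<^bsub>gG g\<^esub>} \<otimes>\<^bsub>cH m'\<^esub> y"
    using q unfolding Q_def by auto
  have em: "{i\<in>I. a i \<noteq> \<one>\<^bsub>gG g\<^esub>} = {}"
    using triv d unfolding \<pi>_def by auto
  have "\<phi> n = \<one>\<^bsub>cH m'\<^esub> \<otimes>\<^bsub>cH m'\<^esub> y" using E unfolding em comm_monoid.finprod_empty[OF comm_group.axioms(1)[OF ZC]] by simp
  also have "\<dots> = y" using yc cen_sub grHm' by (auto simp: center_def group.is_monoid)
  finally show "w \<in> carrier (cH c)" using wn yc by (auto simp: center_def)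
qed

end
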